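(* Let $X$ be a simplicial complex with vertex set $V$ and $1$-skeleton $\mathcal G$. Let $\hat d$ be a metric on $V$ that is $(A,B)$-quasi-isometric to $d_{\mathcal G}$ for constants $A\ge1$, $B\ge0$, i.e. $\frac1A d_{\mathcal G}(u,v)-B\le \hat d(u,v)\le A\,d_{\mathcal G}(u,v)+B$ for all $u,v\in V$. Then there is a metric $\tilde d$ on $X$ extending $\hat d$ (namely $\tilde d(x,y)=\min\{\hat D(x,y),3(A+B)d_X(x,y)\}$) such that: (1) if $x,y\in X$ have disjoint supports then $\tilde d(x,y)=\hat D(x,y)$; (2) there is a constant $B'\ge0$ (one may take $B'=2(A+B)$) such that for all $x,y\in X$, \[\hat D(x,y)-B'\le \tilde d(x,y)\le \hat D(x,y)+B'.\]
   Context: Points $x\in X$ have barycentric coordinates $(x_u)_{u\in V}$ (finitely many nonzero, summing to $1$); $\mathrm{supp}(x)=\{u\in V:x_u\neq0\}$. $\hat D(x,y)=\sum_{u,v\in V}x_uy_v\,\hat d(u,v)$ is the bilinear extension of $\hat d$. $d_{\mathcal G}$ is the word metric on the $1$-skeleton (every edge length $1$). For a simplex $\sigma$ and $x,y\in\sigma$, $d_\sigma(x,y)=\tfrac12\sum_{u\in V(\sigma)}|x_u-y_u|$; a path from $x$ to $y$ is a sequence $x=a_0,\dots,a_r=y$ with consecutive points in a common simplex $\sigma_i$, of length $\sum_i d_{\sigma_i}(a_{i-1},a_i)$; the $\ell^1$-path metric $d_X(x,y)$ is the infimum of lengths of such paths. *)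

theory Defs
  imports Complex_Main "HOL-Library.Extended_Nat"
begin

definition simplicial_complex :: "'v set set \<Rightarrow> bool" where
  "simplicial_complex K \<longleftrightarrow>
     (\<forall>\<sigma>\<in>K. finite \<sigma> \<and> \<sigma> \<noteq> {}) \<and>
     (\<forall>\<sigma>\<in>K. \<forall>\<tau>. \<tau> \<subseteq> \<sigma> \<and> \<tau> \<noteq> {} \<longrightarrow> \<tau> \<in> K)"

definition vertices :: "'v set set \<Rightarrow> 'v set" where
  "vertices K = \<Union>K"

definition supp :: "('v \<Rightarrow> real) \<Rightarrow> 'v set" where
  "supp x = {u. x u \<noteq> 0}"

text \<open>Points of the geometric realisation |K|, in barycentric coordinates.\<close>
definition points :: "'v set set \<Rightarrow> ('v \<Rightarrow> real) set" where
  "points K = {x. (\<forall>u. x u \<ge> 0) \<and> supp x \<in> K \<and> (\<Sum>u\<in>supp x. x u) = 1}"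

definition vpt :: "'v \<Rightarrow> ('v \<Rightarrow> real)" where
  "vpt u = (\<lambda>w. if w = u then 1 else 0)"

definition bilin_ext :: "('v \<Rightarrow> 'v \<Rightarrow> real) \<Rightarrow> ('v \<Rightarrow> real) \<Rightarrow> ('v \<Rightarrow> real) \<Rightarrow> real" where
  "bilin_ext d x y = (\<Sum>u\<in>supp x. \<Sum>v\<in>supp y. x u * y v * d u v)"

text \<open>Edge walks in the 1-skeleton and the word metric (value \<infinity> if no walk exists).\<close>
definition is_walk :: "'v set set \<Rightarrow> 'v list \<Rightarrow> bool" where
  "is_walk K ws \<longleftrightarrow> ws \<noteq> [] \<and> set ws \<subseteq> vertices K \<and>
     (\<forall>i. Suc i < length ws \<longrightarrow> ws!i \<noteq> ws!Suc i \<and> {ws!i, ws!Suc i} \<in> K)"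

definition graph_dist :: "'v set set \<Rightarrow> 'v \<Rightarrow> 'v \<Rightarrow> enat" where
  "graph_dist K u v = (INF ws\<in>{ws. is_walk K ws \<and> hd ws = u \<and> last ws = v}. enat (length ws - 1))"

definition simplex_dist :: "'v set \<Rightarrow> ('v \<Rightarrow> real) \<Rightarrow> ('v \<Rightarrow> real) \<Rightarrow> real" where
  "simplex_dist \<sigma> x y = (1/2) * (\<Sum>u\<in>\<sigma>. \<bar>x u - y u\<bar>)"

definition is_path :: "'v set set \<Rightarrow> ('v \<Rightarrow> real) list \<Rightarrow> 'v set list \<Rightarrow> bool" where
  "is_path K ps ss \<longleftrightarrow> ps \<noteq> [] \<and> length ss + 1 = length ps \<and> set ps \<subseteq> points K \<and> set ss \<subseteq> K \<and>
     (\<forall>i<length ss. supp (ps!i) \<subseteq> ss!i \<and> supp (ps!Suc i) \<subseteq> ss!i)"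

definition path_length :: "('v \<Rightarrow> real) list \<Rightarrow> 'v set list \<Rightarrow> real" where
  "path_length ps ss = (\<Sum>i<length ss. simplex_dist (ss!i) (ps!i) (ps!Suc i))"

definition path_metric :: "'v set set \<Rightarrow> ('v \<Rightarrow> real) \<Rightarrow> ('v \<Rightarrow> real) \<Rightarrow> real" where
  "path_metric K x y = Inf {path_length ps ss | ps ss. is_path K ps ss \<and> hd ps = x \<and> last ps = y}"

definition metric_on :: "'a set \<Rightarrow> ('a \<Rightarrow> 'a \<Rightarrow> real) \<Rightarrow> bool" where
  "metric_on S d \<longleftrightarrow>
     (\<forall>x\<in>S. \<forall>y\<in>S. 0 \<le> d x y \<and> (d x y = 0 \<longleftrightarrow> x = y) \<and> d x y = d y x) \<and>
     (\<forall>x\<in>S. \<forall>y\<in>S. \<forall>z\<in>S. d x z \<le> d x y + d y z)"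

text \<open>(A,B)-quasi-isometry of dhat to the word metric; in particular d_G is finite.\<close>
definition quasi_isometric :: "'v set set \<Rightarrow> ('v \<Rightarrow> 'v \<Rightarrow> real) \<Rightarrow> real \<Rightarrow> real \<Rightarrow> bool" where
  "quasi_isometric K dh A B \<longleftrightarrow>
     (\<forall>u\<in>vertices K. \<forall>v\<in>vertices K. \<exists>n::nat. graph_dist K u v = enat n \<and>
        (1/A) * real n - B \<le> dh u v \<and> dh u v \<le> A * real n + B)"

end

theory Submission
  imports Defs
begin



inductive reach :: "'v set set \<Rightarrow> ('v\<Rightarrow>real) \<Rightarrow> ('v\<Rightarrow>real) \<Rightarrow> real \<Rightarrow> bool" for K where
  rrefl: "x \<in> points K \<Longrightarrow> reach K x x 0"
| rstep: "reach K x y l \<Longrightarrow> z \<in> points K \<Longrightarrow> \<sigma> \<in> K \<Longrightarrow> supp y \<subseteq> \<sigma> \<Longrightarrow> supp z \<subseteq> \<sigma>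
          \<Longrightarrow> reach K x z (l + simplex_dist \<sigma> y z)"

lemma reach_points: "reach K x y l \<Longrightarrow> x \<in> points K \<and> y \<in> points K"
  by (induction rule: reach.induct) auto

lemma simplex_dist_nonneg: "0 \<le> simplex_dist \<sigma> a b"
  unfolding simplex_dist_def by (simp add: sum_nonneg)

lemma simplex_dist_sym: "simplex_dist \<sigma> a b = simplex_dist \<sigma> b a"
  unfolding simplex_dist_def by (simp add: abs_minus_commute)

lemma reach_nonneg: "reach K x y l \<Longrightarrow> 0 \<le> l"
  by (induction rule: reach.induct) (auto intro: add_nonneg_nonneg simplex_dist_nonneg)

lemma reach_trans: "reach K y z l2 \<Longrightarrow> reach K x y l1 \<Longrightarrow> reach K x z (l1+l2)"
proof (induction rule: reach.induct)
  case (rrefl x)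
  then show ?case by simp
next
  case (rstep x y l z \<sigma>)
  then show ?case using reach.rstep[of K _ y "l1 + l" z \<sigma>] by (simp add: add.assoc)
qed

lemma reach_one: "x \<in> points K \<Longrightarrow> y \<in> points K \<Longrightarrow> \<sigma> \<in> K \<Longrightarrow> supp x \<subseteq> \<sigma> \<Longrightarrow> supp y \<subseteq> \<sigma>
   \<Longrightarrow> reach K x y (simplex_dist \<sigma> x y)"
  using reach.rstep[OF reach.rrefl, of x K y \<sigma>] by simp

lemma reach_sym: "reach K x y l \<Longrightarrow> reach K y x l"
proof (induction rule: reach.induct)
  case (rrefl x)
  then show ?case by (rule reach.rrefl)
next
  case (rstep x y l z \<sigma>)
  have "reach K z y (simplex_dist \<sigma> z y)"
    using rstep reach_points[OF rstep.hyps(1)] by (intro reach_one) auto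
  from reach_trans[OF rstep.IH this] show ?case
    by (simp add: simplex_dist_sym add.commute)
qed

lemma reach_lip:
  assumes hyp: "\<And>a b \<sigma>. a\<in>points K \<Longrightarrow> b\<in>points K \<Longrightarrow> \<sigma>\<in>K \<Longrightarrow> supp a\<subseteq>\<sigma> \<Longrightarrow> supp b\<subseteq>\<sigma>
      \<Longrightarrow> f b - f a \<le> C * simplex_dist \<sigma> a b"
  shows "reach K x y l \<Longrightarrow> f y - f x \<le> C * l"
proof (induction rule: reach.induct)
  case (rrefl x)
  then show ?case by simp
next
  case (rstep x y l z \<sigma>)
  have "f z - f y \<le> C * simplex_dist \<sigma> y z"
    using rstep reach_points[OF rstep.hyps(1)] by (intro hyp) auto
  then show ?case using rstep.IH by (simp add: distrib_left)
qed

lemma path_to_reach: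
  assumes p: "is_path K ps ss"
  shows "reach K (hd ps) (last ps) (path_length ps ss)"
proof -
  have ne: "ps \<noteq> []" and len: "length ss + 1 = length ps" and pts: "set ps \<subseteq> points K"
    and sk: "set ss \<subseteq> K"
    and sp: "\<And>i. i<length ss \<Longrightarrow> supp (ps!i) \<subseteq> ss!i \<and> supp (ps!Suc i) \<subseteq> ss!i"
    using p unfolding is_path_def by auto
  have "n \<le> length ss \<Longrightarrow> reach K (ps!0) (ps!n) (\<Sum>i<n. simplex_dist (ss!i) (ps!i) (ps!Suc i))" for n
  proof (induction n)
    case 0
    then show ?case using ne pts by (auto intro!: reach.rrefl)
  next
    case (Suc n)
    have "ps ! Suc n \<in> points K" using Suc.prems len pts by (auto simp: subset_iff)
    moreover have "ss ! n \<in> K" using Suc.prems sk by (auto simp: subset_iff)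
    ultimately show ?case using Suc sp[of n]
      by (auto intro: reach.rstep)
  qed
  moreover have "length ps - 1 = length ss" using len by simp
  ultimately show ?thesis using ne
    by (simp add: hd_conv_nth last_conv_nth path_length_def)
qed

lemma reach_to_path:
  "reach K x y l \<Longrightarrow> \<exists>ps ss. is_path K ps ss \<and> hd ps = x \<and> last ps = y \<and> path_length ps ss = l"
proof (induction rule: reach.induct)
  case (rrefl x)
  show ?case
    by (rule exI[of _ "[x]"], rule exI[of _ "[]"]) (use rrefl in \<open>auto simp: is_path_def path_length_def\<close>)
next
  case (rstep x y l z \<sigma>)
  then obtain ps ss where p: "is_path K ps ss" "hd ps = x" "last ps = y" "path_length ps ss = l" by blast
  have ne: "ps \<noteq> []" and len: "length ss + 1 = length ps" and pts: "set ps \<subseteq> points K"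
    and sk: "set ss \<subseteq> K"
    and sp: "\<And>i. i<length ss \<Longrightarrow> supp (ps!i) \<subseteq> ss!i \<and> supp (ps!Suc i) \<subseteq> ss!i"
    using p unfolding is_path_def by auto
  have "length ps - 1 = length ss" using len by simp
  then have lastn: "ps ! length ss = y" using p(3) ne by (simp add: last_conv_nth)
  have "\<forall>i<length (ss @ [\<sigma>]). supp ((ps @ [z]) ! i) \<subseteq> (ss @ [\<sigma>]) ! i \<and> supp ((ps @ [z]) ! Suc i) \<subseteq> (ss @ [\<sigma>]) ! i"
  proof (intro allI impI)
    fix i assume i: "i < length (ss @ [\<sigma>])"
    show "supp ((ps @ [z]) ! i) \<subseteq> (ss @ [\<sigma>]) ! i \<and> supp ((ps @ [z]) ! Suc i) \<subseteq> (ss @ [\<sigma>]) ! i"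
    proof (cases "i < length ss")
      case True
      then show ?thesis using sp[of i] len by (simp add: nth_append)
    next
      case False
      then have "i = length ss" using i by simp
      then show ?thesis using rstep len lastn by (simp add: nth_append)
    qed
  qed
  then have "is_path K (ps@[z]) (ss@[\<sigma>])"
    unfolding is_path_def using len pts sk rstep by auto
  moreover have "path_length (ps@[z]) (ss@[\<sigma>]) = l + simplex_dist \<sigma> y z"
  proof -
    have "path_length (ps@[z]) (ss@[\<sigma>]) =
       (\<Sum>i<length ss. simplex_dist ((ss@[\<sigma>])!i) ((ps@[z])!i) ((ps@[z])!Suc i))
        + simplex_dist \<sigma> y z"
    proof -
      have e: "length (ss@[\<sigma>]) = Suc (length ss)" by simp
      have t: "simplex_dist ((ss@[\<sigma>])!length ss) ((ps@[z])!length ss) ((ps@[z])!Suc (length ss))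
          = simplex_dist \<sigma> y z" using len lastn by (simp add: nth_append)
      show ?thesis unfolding path_length_def e sum.lessThan_Suc t ..
    qed
    also have "(\<Sum>i<length ss. simplex_dist ((ss@[\<sigma>])!i) ((ps@[z])!i) ((ps@[z])!Suc i)) = l"
      unfolding p(4)[symmetric] path_length_def using len by (intro sum.cong) (auto simp: nth_append)
    finally show ?thesis .
  qed
  ultimately show ?case using p ne by (intro exI[of _ "ps@[z]"] exI[of _ "ss@[\<sigma>]"]) auto
qed

lemma path_metric_reach: "path_metric K x y = Inf {l. reach K x y l}"
proof -
  have "{path_length ps ss | ps ss. is_path K ps ss \<and> hd ps = x \<and> last ps = y} = {l. reach K x y l}"
    using path_to_reach reach_to_path by fastforce
  then show ?thesis unfolding path_metric_def by simp
qed




lemma Inf_reach_le: "reach K x y l \<Longrightarrow> Inf {l. reach K x y l} \<le> l"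
  by (rule cInf_lower) (auto intro!: bdd_belowI[of _ 0] dest: reach_nonneg)

lemma Inf_reach_ge: "reach K x y l0 \<Longrightarrow> (\<And>l. reach K x y l \<Longrightarrow> a \<le> l) \<Longrightarrow> a \<le> Inf {l. reach K x y l}"
  by (rule cInf_greatest) auto

lemma points_D: assumes "x \<in> points K" "simplicial_complex K"
  shows "supp x \<in> K" "finite (supp x)" "supp x \<noteq> {}" "supp x \<subseteq> vertices K"
        "\<And>u. 0 \<le> x u" "sum x (supp x) = 1"
  using assms unfolding points_def simplicial_complex_def vertices_def by auto

lemma sum_supp: "finite T \<Longrightarrow> supp x \<subseteq> T \<Longrightarrow> (\<Sum>u\<in>supp x. x u * h u) = (\<Sum>u\<in>T. x u * h u)"
  by (rule sum.mono_neutral_left) (auto simp: supp_def)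

lemma sum_supp1: "finite T \<Longrightarrow> supp x \<subseteq> T \<Longrightarrow> sum x (supp x) = sum x T"
  by (rule sum.mono_neutral_left) (auto simp: supp_def)

lemma supp_vpt: "supp (vpt u) = {u}"
  by (auto simp: supp_def vpt_def)

lemma D_alt: "bilin_ext d x y = (\<Sum>u\<in>supp x. x u * (\<Sum>v\<in>supp y. y v * d u v))"
  by (simp add: bilin_ext_def sum_distrib_left mult.assoc)

locale qi =
  fixes K :: "'v set set" and dh :: "'v \<Rightarrow> 'v \<Rightarrow> real" and A B :: real
  assumes sc: "simplicial_complex K" and met: "metric_on (vertices K) dh"
    and A1: "A \<ge> 1" and B0: "B \<ge> 0" and qi: "quasi_isometric K dh A B"
begin

lemma dnn: "u \<in> vertices K \<Longrightarrow> v \<in> vertices K \<Longrightarrow> 0 \<le> dh u v"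
  using met unfolding metric_on_def by auto
lemma dzero: "u \<in> vertices K \<Longrightarrow> v \<in> vertices K \<Longrightarrow> dh u v = 0 \<longleftrightarrow> u = v"
  using met unfolding metric_on_def by auto
lemma dsym: "u \<in> vertices K \<Longrightarrow> v \<in> vertices K \<Longrightarrow> dh u v = dh v u"
  using met unfolding metric_on_def by auto
lemma dtri: "u \<in> vertices K \<Longrightarrow> v \<in> vertices K \<Longrightarrow> w \<in> vertices K \<Longrightarrow> dh u w \<le> dh u v + dh v w"
  using met unfolding metric_on_def by auto

lemma simp_sub: "\<sigma> \<in> K \<Longrightarrow> \<tau> \<subseteq> \<sigma> \<Longrightarrow> \<tau> \<noteq> {} \<Longrightarrow> \<tau> \<in> K"
  using sc unfolding simplicial_complex_def by blast

lemma simp_vert: "\<sigma> \<in> K \<Longrightarrow> \<sigma> \<subseteq> vertices K"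
  unfolding vertices_def by auto

lemma vpt_points: "u \<in> vertices K \<Longrightarrow> vpt u \<in> points K"
proof -
  assume "u \<in> vertices K"
  then obtain \<sigma> where "\<sigma> \<in> K" "u \<in> \<sigma>" unfolding vertices_def by auto
  then have "{u} \<in> K" using simp_sub by blast
  moreover have "\<forall>w. 0 \<le> vpt u w" "sum (vpt u) {u} = 1" by (auto simp: vpt_def)
  ultimately show ?thesis unfolding points_def by (simp add: supp_vpt)
qed

lemma edge_bound:
  assumes "\<sigma> \<in> K" "u \<in> \<sigma>" "v \<in> \<sigma>" shows "dh u v \<le> A + B"
proof (cases "u = v")
  case True
  then show ?thesis using dzero[of u u] simp_vert[OF assms(1)] assms A1 B0 by auto
next
  case False
  have uv: "u \<in> vertices K" "v \<in> vertices K" using simp_vert[OF assms(1)] assms by auto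
  then obtain n :: nat where n: "graph_dist K u v = enat n" "dh u v \<le> A * real n + B"
    using qi unfolding quasi_isometric_def by blast
  have "{u, v} \<in> K" using simp_sub[OF assms(1)] assms by auto
  then have "is_walk K [u, v]" using False uv unfolding is_walk_def
    by (auto simp: less_Suc_eq)
  then have "graph_dist K u v \<le> enat (length [u,v] - 1)"
    unfolding graph_dist_def by (intro INF_lower) auto
  then have "n \<le> 1" using n(1) by (simp add: one_enat_def)
  then have "A * real n \<le> A * 1" using A1 by (intro mult_left_mono) auto
  then show ?thesis using n by simp
qed

lemma walk_conn: "is_walk K ws \<Longrightarrow> \<exists>l. reach K (vpt (hd ws)) (vpt (last ws)) l"
proof (induction ws)
  case Nil
  then show ?case by (simp add: is_walk_def)
next
  case (Cons a ws)
  have av: "a \<in> vertices K" using Cons.prems unfolding is_walk_def by auto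
  show ?case
  proof (cases "ws = []")
    case True
    then show ?thesis using reach.rrefl[OF vpt_points[OF av]] by auto
  next
    case False
    have w: "is_walk K ws" using Cons.prems False unfolding is_walk_def
      by (auto dest: spec[of _ "Suc _"])
    have e: "a \<noteq> hd ws" "{a, hd ws} \<in> K" using Cons.prems False unfolding is_walk_def
      by (auto dest!: spec[of _ 0] simp: hd_conv_nth)
    have hv: "hd ws \<in> vertices K" using w unfolding is_walk_def by auto
    have r1: "reach K (vpt a) (vpt (hd ws)) (simplex_dist {a, hd ws} (vpt a) (vpt (hd ws)))"
      using e av hv by (intro reach_one vpt_points) (auto simp: supp_vpt)
    obtain l where "reach K (vpt (hd ws)) (vpt (last ws)) l" using Cons.IH w by blast
    from reach_trans[OF this r1] show ?thesis using False by auto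
  qed
qed

lemma conn: assumes "x \<in> points K" "y \<in> points K" shows "\<exists>l. reach K x y l"
proof -
  obtain u where u: "u \<in> supp x" using points_D(3)[OF assms(1) sc] by blast
  obtain v where v: "v \<in> supp y" using points_D(3)[OF assms(2) sc] by blast
  have uv: "u \<in> vertices K" "v \<in> vertices K" using u v points_D(4)[OF _ sc] assms by auto
  have r1: "reach K x (vpt u) (simplex_dist (supp x) x (vpt u))"
    using assms u points_D(1)[OF assms(1) sc] by (intro reach_one vpt_points uv) (auto simp: supp_vpt)
  have r3: "reach K y (vpt v) (simplex_dist (supp y) y (vpt v))"
    using assms v points_D(1)[OF assms(2) sc] by (intro reach_one vpt_points uv) (auto simp: supp_vpt)
  obtain n where "graph_dist K u v = enat n" using qi uv unfolding quasi_isometric_def by blast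
  then have "{ws. is_walk K ws \<and> hd ws = u \<and> last ws = v} \<noteq> {}"
  proof (intro notI)
    assume "graph_dist K u v = enat n" "{ws. is_walk K ws \<and> hd ws = u \<and> last ws = v} = {}"
    then have "enat n = top" unfolding graph_dist_def by simp
    then show False by (simp add: top_enat_def)
  qed
  then obtain ws where "is_walk K ws" "hd ws = u" "last ws = v" by blast
  then obtain l where r2: "reach K (vpt u) (vpt v) l" using walk_conn by blast
  show ?thesis using reach_trans[OF reach_sym[OF r3] reach_trans[OF r2 r1]] by blast
qed

end



context qi begin

abbreviation "D \<equiv> bilin_ext dh"

lemma D_vpt: "D (vpt u) (vpt v) = dh u v"
  unfolding bilin_ext_def supp_vpt by (simp add: vpt_def)

lemma D_nonneg: assumes "x \<in> points K" "y \<in> points K" shows "0 \<le> D x y"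
  unfolding bilin_ext_def using points_D[OF assms(1) sc] points_D[OF assms(2) sc]
  by (intro sum_nonneg mult_nonneg_nonneg dnn) auto

lemma D_sym: assumes "x \<in> points K" "y \<in> points K" shows "D x y = D y x"
proof -
  have "D x y = (\<Sum>v\<in>supp y. \<Sum>u\<in>supp x. x u * y v * dh u v)"
    unfolding bilin_ext_def by (rule sum.swap)
  also have "\<dots> = D y x" unfolding bilin_ext_def
    using points_D(4)[OF assms(1) sc] points_D(4)[OF assms(2) sc]
  proof (intro sum.cong refl)
    fix v u assume "v \<in> supp y" "u \<in> supp x"
    then have "dh u v = dh v u" using points_D(4)[OF assms(1) sc] points_D(4)[OF assms(2) sc]
      by (intro dsym) auto
    then show "x u * y v * dh u v = y v * x u * dh v u" by (simp add: mult.commute)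
  qed
  finally show ?thesis .
qed

lemma D_zero: assumes x: "x \<in> points K" and y: "y \<in> points K" and z: "D x y = 0" shows "x = y"
proof -
  note px = points_D[OF x sc] and py = points_D[OF y sc]
  have t: "\<forall>u\<in>supp x. \<forall>v\<in>supp y. x u * y v * dh u v = 0"
  proof -
    have nn: "\<And>u v. u \<in> supp x \<Longrightarrow> v \<in> supp y \<Longrightarrow> 0 \<le> x u * y v * dh u v"
      using px py by (auto intro!: mult_nonneg_nonneg dnn)
    have "\<forall>u\<in>supp x. (\<Sum>v\<in>supp y. x u * y v * dh u v) = 0"
      using z px py nn unfolding bilin_ext_def
      by (subst sum_nonneg_eq_0_iff[symmetric]) (auto intro!: sum_nonneg)
    then show ?thesis using nn py by (auto simp: sum_nonneg_eq_0_iff)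
  qed
  have eq: "\<And>u v. u \<in> supp x \<Longrightarrow> v \<in> supp y \<Longrightarrow> u = v"
  proof -
    fix u v assume uv: "u \<in> supp x" "v \<in> supp y"
    then have "x u \<noteq> 0" "y v \<noteq> 0" by (auto simp: supp_def)
    then have "dh u v = 0" using t uv by auto
    then show "u = v" using dzero[of u v] uv px(4) py(4) by auto
  qed
  obtain w where w: "w \<in> supp x" using px by blast
  obtain w' where w': "w' \<in> supp y" using py by blast
  have sx: "supp x = {w}" using eq w w' by blast
  have sy: "supp y = {w}" using eq w w' by blast
  show "x = y"
  proof
    fix t show "x t = y t"
    proof (cases "t = w")
      case True then show ?thesis using px(6) py(6) sx sy by simp
    next
      case False then have "t \<notin> supp x" "t \<notin> supp y" using sx sy by auto
      then show ?thesis by (simp add: supp_def)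
    qed
  qed
qed

lemma D_tri: assumes x: "x \<in> points K" and y: "y \<in> points K" and z: "z \<in> points K"
  shows "D x z \<le> D x y + D y z"
proof -
  note px = points_D[OF x sc] and py = points_D[OF y sc] and pz = points_D[OF z sc]
  have I: "(\<Sum>w\<in>supp z. z w * dh u w) \<le> (\<Sum>v\<in>supp y. y v * dh u v) + D y z"
    if u: "u \<in> vertices K" for u
  proof -
    have "(\<Sum>w\<in>supp z. z w * dh u w) = (\<Sum>v\<in>supp y. y v * (\<Sum>w\<in>supp z. z w * dh u w))"
      using py(6) by (simp add: sum_distrib_right[symmetric])
    also have "\<dots> \<le> (\<Sum>v\<in>supp y. y v * (dh u v + (\<Sum>w\<in>supp z. z w * dh v w)))"
    proof (intro sum_mono mult_left_mono)
      fix v assume v: "v \<in> supp y"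
      have "(\<Sum>w\<in>supp z. z w * dh u w) \<le> (\<Sum>w\<in>supp z. z w * (dh u v + dh v w))"
        using v py pz u by (intro sum_mono mult_left_mono dtri) auto
      also have "\<dots> = dh u v + (\<Sum>w\<in>supp z. z w * dh v w)"
        using pz(6) by (simp add: distrib_left sum.distrib sum_distrib_right[symmetric])
      finally show "(\<Sum>w\<in>supp z. z w * dh u w) \<le> dh u v + (\<Sum>w\<in>supp z. z w * dh v w)" .
    qed (use py in auto)
    also have "\<dots> = (\<Sum>v\<in>supp y. y v * dh u v) + D y z"
      by (simp add: distrib_left sum.distrib D_alt)
    finally show ?thesis .
  qed
  have "D x z \<le> (\<Sum>u\<in>supp x. x u * ((\<Sum>v\<in>supp y. y v * dh u v) + D y z))"
    unfolding D_alt[of _ x z] using px by (intro sum_mono mult_left_mono I) auto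
  also have "\<dots> = D x y + D y z"
    using px(6) by (simp add: distrib_left sum.distrib D_alt sum_distrib_right[symmetric])
  finally show ?thesis .
qed

lemma D_diag: assumes x: "x \<in> points K" shows "D x x \<le> A + B"
proof -
  note px = points_D[OF x sc]
  have "D x x \<le> (\<Sum>u\<in>supp x. x u * (\<Sum>v\<in>supp x. x v * (A + B)))"
    unfolding D_alt using px by (intro sum_mono mult_left_mono edge_bound) auto
  also have "\<dots> = A + B" using px(6) by (simp add: sum_distrib_right[symmetric])
  finally show ?thesis .
qed

lemma D_lip: assumes x: "x \<in> points K" and a: "a \<in> points K" and b: "b \<in> points K"
   and s: "\<sigma> \<in> K" "supp a \<subseteq> \<sigma>" "supp b \<subseteq> \<sigma>"
  shows "D x b - D x a \<le> 2 * (A + B) * simplex_dist \<sigma> a b"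
proof -
  note px = points_D[OF x sc] and pa = points_D[OF a sc] and pb = points_D[OF b sc]
  have fs: "finite \<sigma>" "\<sigma> \<noteq> {}" using s(1) sc unfolding simplicial_complex_def by auto
  obtain v0 where v0: "v0 \<in> \<sigma>" using fs by blast
  have sv: "\<sigma> \<subseteq> vertices K" using simp_vert[OF s(1)] .
  have sb: "sum b \<sigma> = 1" "sum a \<sigma> = 1"
    using sum_supp1[OF fs(1) s(3)] sum_supp1[OF fs(1) s(2)] pa(6) pb(6) by auto
  have G: "(\<Sum>v\<in>supp b. b v * dh u v) - (\<Sum>v\<in>supp a. a v * dh u v)
      \<le> 2 * (A + B) * simplex_dist \<sigma> a b" if u: "u \<in> vertices K" for u
  proof -
    have "(\<Sum>v\<in>supp b. b v * dh u v) - (\<Sum>v\<in>supp a. a v * dh u v)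
        = (\<Sum>v\<in>\<sigma>. (b v - a v) * dh u v)"
      using sum_supp[OF fs(1) s(3)] sum_supp[OF fs(1) s(2)]
      by (simp add: left_diff_distrib sum_subtractf)
    also have "\<dots> = (\<Sum>v\<in>\<sigma>. (b v - a v) * (dh u v - dh u v0))"
      using sb by (simp add: right_diff_distrib sum_subtractf sum_distrib_right[symmetric])
    also have "\<dots> \<le> (\<Sum>v\<in>\<sigma>. \<bar>b v - a v\<bar> * (A + B))"
    proof (intro sum_mono)
      fix v assume v: "v \<in> \<sigma>"
      have "dh u v \<le> dh u v0 + dh v0 v" "dh u v0 \<le> dh u v + dh v v0"
        using dtri u v v0 sv by auto
      moreover have "dh v0 v \<le> A + B" "dh v v0 \<le> A + B" using edge_bound s(1) v v0 by auto
      ultimately have "\<bar>dh u v - dh u v0\<bar> \<le> A + B" by auto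
      then have m1: "\<bar>b v - a v\<bar> * \<bar>dh u v - dh u v0\<bar> \<le> \<bar>b v - a v\<bar> * (A + B)"
        by (intro mult_left_mono) auto
      moreover have "(b v - a v) * (dh u v - dh u v0) \<le> \<bar>b v - a v\<bar> * \<bar>dh u v - dh u v0\<bar>"
        by (metis abs_ge_self abs_mult)
      ultimately show "(b v - a v) * (dh u v - dh u v0) \<le> \<bar>b v - a v\<bar> * (A + B)" by linarith
    qed
    also have "\<dots> = 2 * (A + B) * simplex_dist \<sigma> a b"
      unfolding simplex_dist_def by (simp add: sum_distrib_right[symmetric] abs_minus_commute)
    finally show ?thesis .
  qed
  have "D x b - D x a = (\<Sum>u\<in>supp x. x u * ((\<Sum>v\<in>supp b. b v * dh u v) - (\<Sum>v\<in>supp a. a v * dh u v)))"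
    unfolding D_alt by (simp add: right_diff_distrib sum_subtractf)
  also have "\<dots> \<le> (\<Sum>u\<in>supp x. x u * (2 * (A + B) * simplex_dist \<sigma> a b))"
    using px by (intro sum_mono mult_left_mono G) auto
  also have "\<dots> = 2 * (A + B) * simplex_dist \<sigma> a b"
    using px(6) by (simp add: sum_distrib_right[symmetric])
  finally show ?thesis .
qed

end



definition Nf :: "('v \<Rightarrow> real) \<Rightarrow> ('v \<Rightarrow> real) \<Rightarrow> real" where
  "Nf x a = (1/2) * (\<Sum>u\<in>supp a \<union> supp x. \<bar>a u - x u\<bar>)"

lemma Nf_T: "finite T \<Longrightarrow> supp a \<union> supp x \<subseteq> T \<Longrightarrow> Nf x a = (1/2) * (\<Sum>u\<in>T. \<bar>a u - x u\<bar>)"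
  unfolding Nf_def by (subst sum.mono_neutral_left[of T]) (auto simp: supp_def)

lemma Inf_reach_mult: "0 < C \<Longrightarrow> reach K a b l0 \<Longrightarrow> (\<And>l. reach K a b l \<Longrightarrow> t \<le> C * l)
   \<Longrightarrow> t \<le> C * Inf {l. reach K a b l}"
proof -
  assume C: "0 < C" and r: "reach K a b l0" and h: "\<And>l. reach K a b l \<Longrightarrow> t \<le> C * l"
  have "t / C \<le> Inf {l. reach K a b l}"
    using r by (rule Inf_reach_ge) (use h C in \<open>simp add: pos_divide_le_eq mult.commute\<close>)
  then show ?thesis using C by (simp add: pos_divide_le_eq mult.commute)
qed

context qi begin

abbreviation "L \<equiv> path_metric K"

lemma ABpos: "0 < A + B" using A1 B0 by simp

lemma L_nonneg: "x \<in> points K \<Longrightarrow> y \<in> points K \<Longrightarrow> 0 \<le> L x y"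
proof -
  assume "x \<in> points K" "y \<in> points K"
  then obtain l0 where r: "reach K x y l0" using conn by blast
  show ?thesis unfolding path_metric_reach using r by (rule Inf_reach_ge) (rule reach_nonneg)
qed

lemma L_refl: "x \<in> points K \<Longrightarrow> L x x = 0"
  using L_nonneg[of x x] Inf_reach_le[OF reach.rrefl, of x K] unfolding path_metric_reach by simp

lemma L_sym: "L x y = L y x"
proof -
  have "{l. reach K x y l} = {l. reach K y x l}" using reach_sym by blast
  then show ?thesis unfolding path_metric_reach by simp
qed

lemma L_tri: assumes "x \<in> points K" "y \<in> points K" "z \<in> points K"
  shows "L x z \<le> L x y + L y z"
proof -
  obtain l1 where r1: "reach K x y l1" using conn assms by blast
  obtain l2 where r2: "reach K y z l2" using conn assms by blast
  have "L x z - L x y \<le> l" if "reach K y z l" for l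
  proof -
    have "L x z - l \<le> L x y" unfolding path_metric_reach
    proof (rule Inf_reach_ge[OF r1])
      fix la assume "reach K x y la"
      from Inf_reach_le[OF reach_trans[OF that this]] show "Inf {l. reach K x z l} - l \<le> la" by simp
    qed
    then show ?thesis by simp
  qed
  then have "L x z - L x y \<le> L y z" unfolding path_metric_reach[of K y z]
    using Inf_reach_ge[OF r2] by blast
  then show ?thesis by simp
qed

lemma L_D: assumes x: "x \<in> points K" and a: "a \<in> points K" and b: "b \<in> points K"
  shows "D x b - D x a \<le> 2 * (A + B) * L a b"
proof -
  obtain l0 where r: "reach K a b l0" using conn a b by blast
  have "D x b - D x a \<le> 2 * (A + B) * l" if "reach K a b l" for l
    by (rule reach_lip[where f = "D x", OF _ that]) (rule D_lip[OF x], assumption+)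
  then show ?thesis unfolding path_metric_reach
    using ABpos by (intro Inf_reach_mult[OF _ r]) auto
qed

lemma N_lip: assumes x: "x \<in> points K" and a: "a \<in> points K" and b: "b \<in> points K"
   and s: "\<sigma> \<in> K" "supp a \<subseteq> \<sigma>" "supp b \<subseteq> \<sigma>"
  shows "Nf x b - Nf x a \<le> 1 * simplex_dist \<sigma> a b"
proof -
  have fs: "finite \<sigma>" using s(1) sc unfolding simplicial_complex_def by auto
  let ?T = "\<sigma> \<union> supp x"
  have fT: "finite ?T" using fs points_D(2)[OF x sc] by simp
  have e1: "Nf x b = (1/2) * (\<Sum>u\<in>?T. \<bar>b u - x u\<bar>)" using Nf_T[OF fT] s by auto
  have e2: "Nf x a = (1/2) * (\<Sum>u\<in>?T. \<bar>a u - x u\<bar>)" using Nf_T[OF fT] s by auto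
  have zz: "\<And>i. i \<notin> \<sigma> \<Longrightarrow> a i = 0 \<and> b i = 0" using s(2,3) unfolding supp_def by blast
  have e3: "simplex_dist \<sigma> a b = (1/2) * (\<Sum>u\<in>?T. \<bar>a u - b u\<bar>)"
    unfolding simplex_dist_def using zz fT
    by (subst sum.mono_neutral_left[of ?T]) auto
  have "(\<Sum>u\<in>?T. \<bar>b u - x u\<bar>) \<le> (\<Sum>u\<in>?T. \<bar>a u - x u\<bar> + \<bar>a u - b u\<bar>)"
    by (intro sum_mono) linarith
  then show ?thesis unfolding e1 e2 e3 by (simp add: sum.distrib)
qed

lemma L_N: assumes x: "x \<in> points K" and y: "y \<in> points K" shows "Nf x y \<le> L x y"
proof -
  obtain l0 where r: "reach K x y l0" using conn x y by blast
  have "Nf x y - Nf x x \<le> 1 * l" if "reach K x y l" for l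
    by (rule reach_lip[where f = "Nf x", OF _ that]) (rule N_lip[OF x], assumption+)
  then have "Nf x y - Nf x x \<le> 1 * L x y" unfolding path_metric_reach
    by (intro Inf_reach_mult[OF _ r]) auto
  moreover have "Nf x x = 0" unfolding Nf_def by simp
  ultimately show ?thesis by simp
qed

lemma L_pos: assumes x: "x \<in> points K" and y: "y \<in> points K" and ne: "x \<noteq> y" shows "0 < L x y"
proof -
  obtain t where t: "x t \<noteq> y t" using ne by blast
  then have tS: "t \<in> supp y \<union> supp x" by (auto simp: supp_def)
  have fin: "finite (supp y \<union> supp x)" using points_D(2)[OF x sc] points_D(2)[OF y sc] by simp
  have "0 < \<bar>y t - x t\<bar>" using t by simp
  also have "\<bar>y t - x t\<bar> \<le> (\<Sum>u\<in>supp y \<union> supp x. \<bar>y u - x u\<bar>)"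
    using fin tS by (intro member_le_sum) auto
  finally have "0 < Nf x y" unfolding Nf_def by simp
  then show ?thesis using L_N[OF x y] by simp
qed

lemma L_disj: assumes x: "x \<in> points K" and y: "y \<in> points K" and d: "supp x \<inter> supp y = {}"
  shows "1 \<le> L x y"
proof -
  have fin: "finite (supp y)" "finite (supp x)" using points_D(2)[OF x sc] points_D(2)[OF y sc] by auto
  have "(\<Sum>u\<in>supp y \<union> supp x. \<bar>y u - x u\<bar>) = (\<Sum>u\<in>supp y. \<bar>y u - x u\<bar>) + (\<Sum>u\<in>supp x. \<bar>y u - x u\<bar>)"
    using fin d by (intro sum.union_disjoint) auto
  also have "(\<Sum>u\<in>supp y. \<bar>y u - x u\<bar>) = sum y (supp y)"
  proof (intro sum.cong refl)
    fix u assume "u \<in> supp y"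
    then have "x u = 0" using d unfolding supp_def by blast
    then show "\<bar>y u - x u\<bar> = y u" using points_D(5)[OF y sc, of u] by simp
  qed
  also have "(\<Sum>u\<in>supp x. \<bar>y u - x u\<bar>) = sum x (supp x)"
  proof (intro sum.cong refl)
    fix u assume "u \<in> supp x"
    then have "y u = 0" using d unfolding supp_def by blast
    then show "\<bar>y u - x u\<bar> = x u" using points_D(5)[OF x sc, of u] by simp
  qed
  finally have "Nf x y = 1" unfolding Nf_def using points_D(6)[OF x sc] points_D(6)[OF y sc] by simp
  then show ?thesis using L_N[OF x y] by simp
qed

end



lemma min_tri: "(c1::real) \<le> a1 + a2 \<Longrightarrow> c2 \<le> b1 + b2 \<Longrightarrow> c1 \<le> a1 + b2 \<Longrightarrow> c1 \<le> b1 + a2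
   \<Longrightarrow> min c1 c2 \<le> min a1 b1 + min a2 b2"
  unfolding min_def by auto

context qi begin

definition "dtt x y = min (D x y) (3 * (A + B) * L x y)"

lemma dt_metric: "metric_on (points K) dtt"
proof -
  have P1: "0 \<le> dtt x y \<and> (dtt x y = 0 \<longleftrightarrow> x = y) \<and> dtt x y = dtt y x"
    if x: "x \<in> points K" and y: "y \<in> points K" for x y
  proof (intro conjI)
    show "0 \<le> dtt x y" unfolding dtt_def using D_nonneg[OF x y] L_nonneg[OF x y] ABpos by simp
    show "dtt x y = dtt y x" unfolding dtt_def using D_sym[OF x y] L_sym[of x y] by simp
    show "dtt x y = 0 \<longleftrightarrow> x = y"
    proof
      assume "x = y" then show "dtt x y = 0" unfolding dtt_def using L_refl[OF x] D_nonneg[OF x x] by simp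
    next
      assume z: "dtt x y = 0"
      show "x = y"
      proof (rule ccontr)
        assume ne: "x \<noteq> y"
        have "0 < D x y" using D_nonneg[OF x y] D_zero[OF x y] ne by fastforce
        moreover have "0 < 3 * (A + B) * L x y" using L_pos[OF x y ne] ABpos by simp
        ultimately show False using z unfolding dtt_def by simp
      qed
    qed
  qed
  have P2: "dtt x z \<le> dtt x y + dtt y z"
    if x: "x \<in> points K" and y: "y \<in> points K" and z: "z \<in> points K" for x y z
  proof -
    have c: "2 * (A + B) * L a b \<le> 3 * (A + B) * L a b" if "a \<in> points K" "b \<in> points K" for a b
      using L_nonneg[OF that] ABpos by (intro mult_right_mono) auto
    have 1: "D x z \<le> D x y + D y z" by (rule D_tri[OF x y z])
    have 2: "L x z \<le> L x y + L y z" by (rule L_tri[OF x y z])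
    have 3: "D x z \<le> D x y + 3 * (A + B) * L y z" using L_D[OF x y z] c[OF y z] by simp
    have 4: "D x z \<le> 3 * (A + B) * L x y + D y z"
      using L_D[OF z y x] c[OF y x] D_sym[OF x z] D_sym[OF y z] L_sym[of x y] by simp
    have "3 * (A + B) * L x z \<le> 3 * (A + B) * (L x y + L y z)"
      using 2 ABpos by (intro mult_left_mono) auto
    then have t2: "3 * (A + B) * L x z \<le> 3 * (A + B) * L x y + 3 * (A + B) * L y z"
      by (simp add: distrib_left)
    show "dtt x z \<le> dtt x y + dtt y z" unfolding dtt_def by (rule min_tri[OF 1 t2 3 4])
  qed
  show ?thesis unfolding metric_on_def using P1 P2 by simp
qed

lemma main: "(\<forall>x\<in>points K. \<forall>y\<in>points K.
              dtt x y = min (bilin_ext dh x y) (3 * (A + B) * path_metric K x y)) \<and>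
           metric_on (points K) dtt \<and>
           (\<forall>u\<in>vertices K. \<forall>v\<in>vertices K. dtt (vpt u) (vpt v) = dh u v) \<and>
           (\<forall>x\<in>points K. \<forall>y\<in>points K. supp x \<inter> supp y = {} \<longrightarrow> dtt x y = bilin_ext dh x y) \<and>
           (\<exists>B'\<ge>0. \<forall>x\<in>points K. \<forall>y\<in>points K.
              bilin_ext dh x y - B' \<le> dtt x y \<and> dtt x y \<le> bilin_ext dh x y + B')"
proof (intro conjI)
  show "\<forall>x\<in>points K. \<forall>y\<in>points K. dtt x y = min (D x y) (3 * (A + B) * L x y)"
    by (simp add: dtt_def)
  show "metric_on (points K) dtt" by (rule dt_metric)
  show "\<forall>u\<in>vertices K. \<forall>v\<in>vertices K. dtt (vpt u) (vpt v) = dh u v"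
  proof (intro ballI)
    fix u v assume u: "u \<in> vertices K" and v: "v \<in> vertices K"
    note pu = vpt_points[OF u] and pv = vpt_points[OF v]
    have "dh u v \<le> 2 * (A + B) * L (vpt u) (vpt v)"
      using L_D[OF pu pu pv] D_vpt[of u v] D_vpt[of u u] dzero[OF u u] by simp
    also have "\<dots> \<le> 3 * (A + B) * L (vpt u) (vpt v)"
      using L_nonneg[OF pu pv] ABpos by (intro mult_right_mono) auto
    finally show "dtt (vpt u) (vpt v) = dh u v" unfolding dtt_def D_vpt by simp
  qed
  show "\<forall>x\<in>points K. \<forall>y\<in>points K. supp x \<inter> supp y = {} \<longrightarrow> dtt x y = D x y"
  proof (intro ballI impI)
    fix x y assume x: "x \<in> points K" and y: "y \<in> points K" and d: "supp x \<inter> supp y = {}"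
    have "D x y \<le> (A + B) + 2 * (A + B) * L x y" using L_D[OF x x y] D_diag[OF x] by simp
    also have "\<dots> \<le> 3 * (A + B) * L x y"
    proof -
      have "(A + B) * 1 \<le> (A + B) * L x y" using L_disj[OF x y d] ABpos by (intro mult_left_mono) auto
      then show ?thesis by (simp add: algebra_simps)
    qed
    finally show "dtt x y = D x y" unfolding dtt_def by simp
  qed
  show "\<exists>B'\<ge>0. \<forall>x\<in>points K. \<forall>y\<in>points K. D x y - B' \<le> dtt x y \<and> dtt x y \<le> D x y + B'"
  proof (intro exI[of _ "A + B"] conjI ballI)
    show "0 \<le> A + B" using ABpos by simp
    fix x y assume x: "x \<in> points K" and y: "y \<in> points K"
    have "D x y \<le> (A + B) + 2 * (A + B) * L x y" using L_D[OF x x y] D_diag[OF x] by simp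
    moreover have "2 * (A + B) * L x y \<le> 3 * (A + B) * L x y"
      using L_nonneg[OF x y] ABpos by (intro mult_right_mono) auto
    ultimately show "D x y - (A + B) \<le> dtt x y" unfolding dtt_def using ABpos by simp
    show "dtt x y \<le> D x y + (A + B)" unfolding dtt_def using ABpos by simp
  qed
qed

end

theorem mainTheorem7:
  fixes K :: "'v set set" and dh :: "'v \<Rightarrow> 'v \<Rightarrow> real" and A B :: real
  assumes "simplicial_complex K"
    and "metric_on (vertices K) dh"
    and "A \<ge> 1" and "B \<ge> 0"
    and "quasi_isometric K dh A B"
  shows "\<exists>dt :: ('v \<Rightarrow> real) \<Rightarrow> ('v \<Rightarrow> real) \<Rightarrow> real.
           (\<forall>x\<in>points K. \<forall>y\<in>points K.
              dt x y = min (bilin_ext dh x y) (3 * (A + B) * path_metric K x y)) \<and>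
           metric_on (points K) dt \<and>
           (\<forall>u\<in>vertices K. \<forall>v\<in>vertices K. dt (vpt u) (vpt v) = dh u v) \<and>
           (\<forall>x\<in>points K. \<forall>y\<in>points K. supp x \<inter> supp y = {} \<longrightarrow> dt x y = bilin_ext dh x y) \<and>
           (\<exists>B'\<ge>0. \<forall>x\<in>points K. \<forall>y\<in>points K.
              bilin_ext dh x y - B' \<le> dt x y \<and> dt x y \<le> bilin_ext dh x y + B')"
proof -
  interpret qi K dh A B using assms by unfold_locales
  show ?thesis using main by blast
qed


end
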